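(* Let $\mathcal{LS}_{\mathfrak{B}_1}\langle X\rangle$ be the free algebra over a field of characteristic $0$ in the variety of left-symmetric algebras satisfying $(ab)c-(ba)c-(ac)b+(ca)b+(bc)a-(cb)a=0$, and equip it with the commutator $[a,b]=ab-ba$. Then every polynomial identity of degree at most $4$ satisfied by $(\mathcal{LS}_{\mathfrak{B}_1}\langle X\rangle,[\cdot,\cdot])$ is a consequence of anticommutativity and the Jacobi identity.
   Context: A left-symmetric algebra is an algebra with $(a,b,c)=(b,a,c)$, where $(a,b,c)=(ab)c-a(bc)$. *)

theory Defs
  imports Main
begin

text \<open>Nonassociative monomials (binary trees) in the countably many variables x_0, x_1, ...\<close>
datatype mon = V nat | M mon mon

fun mdeg :: "mon \<Rightarrow> nat" where
  "mdeg (V i) = 1"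
| "mdeg (M s t) = mdeg s + mdeg t"

text \<open>Elements of the free nonassociative algebra K{X}: finitely supported coefficient functions.\<close>
type_synonym 'k npoly = "mon \<Rightarrow> 'k"

definition fin_supp :: "'k::zero npoly \<Rightarrow> bool" where
  "fin_supp p \<longleftrightarrow> finite {t. p t \<noteq> 0}"

definition padd :: "'k::field npoly \<Rightarrow> 'k npoly \<Rightarrow> 'k npoly" where
  "padd p q = (\<lambda>t. p t + q t)"

definition psc :: "'k::field \<Rightarrow> 'k npoly \<Rightarrow> 'k npoly" where
  "psc c p = (\<lambda>t. c * p t)"

definition psub :: "'k::field npoly \<Rightarrow> 'k npoly \<Rightarrow> 'k npoly" where
  "psub p q = padd p (psc (-1) q)"

definition pzero :: "'k::field npoly" where
  "pzero = (\<lambda>t. 0)"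

text \<open>Product of the free magma algebra: the monomial M s u arises uniquely from s and u.\<close>
definition pmul :: "'k::field npoly \<Rightarrow> 'k npoly \<Rightarrow> 'k npoly" where
  "pmul p q = (\<lambda>t. case t of V _ \<Rightarrow> 0 | M s u \<Rightarrow> p s * q u)"

definition pcomm :: "'k::field npoly \<Rightarrow> 'k npoly \<Rightarrow> 'k npoly" where
  "pcomm p q = psub (pmul p q) (pmul q p)"

definition passoc :: "'k::field npoly \<Rightarrow> 'k npoly \<Rightarrow> 'k npoly \<Rightarrow> 'k npoly" where
  "passoc a b c = psub (pmul (pmul a b) c) (pmul a (pmul b c))"

definition lsym_rel :: "'k::field npoly \<Rightarrow> 'k npoly \<Rightarrow> 'k npoly \<Rightarrow> 'k npoly" where
  "lsym_rel a b c = psub (passoc a b c) (passoc b a c)"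

definition B1_rel :: "'k::field npoly \<Rightarrow> 'k npoly \<Rightarrow> 'k npoly \<Rightarrow> 'k npoly" where
  "B1_rel a b c =
     padd (psub (pmul (pmul a b) c) (pmul (pmul b a) c))
     (padd (psub (pmul (pmul c a) b) (pmul (pmul a c) b))
           (psub (pmul (pmul b c) a) (pmul (pmul c b) a)))"

text \<open>The T-ideal of K{X} defining the variety LS_B1 (so LS_B1<X> = K{X} / LSB1_ideal).\<close>
inductive_set LSB1_ideal :: "'k::field npoly set" where
  gen_ls: "\<lbrakk>fin_supp a; fin_supp b; fin_supp c\<rbrakk> \<Longrightarrow> lsym_rel a b c \<in> LSB1_ideal"
| gen_B1: "\<lbrakk>fin_supp a; fin_supp b; fin_supp c\<rbrakk> \<Longrightarrow> B1_rel a b c \<in> LSB1_ideal"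
| zero: "pzero \<in> LSB1_ideal"
| add: "\<lbrakk>p \<in> LSB1_ideal; q \<in> LSB1_ideal\<rbrakk> \<Longrightarrow> padd p q \<in> LSB1_ideal"
| smult: "p \<in> LSB1_ideal \<Longrightarrow> psc c p \<in> LSB1_ideal"
| mult_left: "\<lbrakk>p \<in> LSB1_ideal; fin_supp a\<rbrakk> \<Longrightarrow> pmul a p \<in> LSB1_ideal"
| mult_right: "\<lbrakk>p \<in> LSB1_ideal; fin_supp a\<rbrakk> \<Longrightarrow> pmul p a \<in> LSB1_ideal"

inductive_set Lie_ideal :: "'k::field npoly set" where
  gen_anti: "\<lbrakk>fin_supp a; fin_supp b\<rbrakk> \<Longrightarrow> padd (pmul a b) (pmul b a) \<in> Lie_ideal"
| gen_jac: "\<lbrakk>fin_supp a; fin_supp b; fin_supp c\<rbrakk> \<Longrightarrow>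
     padd (pmul (pmul a b) c) (padd (pmul (pmul b c) a) (pmul (pmul c a) b)) \<in> Lie_ideal"
| zero: "pzero \<in> Lie_ideal"
| add: "\<lbrakk>p \<in> Lie_ideal; q \<in> Lie_ideal\<rbrakk> \<Longrightarrow> padd p q \<in> Lie_ideal"
| smult: "p \<in> Lie_ideal \<Longrightarrow> psc c p \<in> Lie_ideal"
| mult_left: "\<lbrakk>p \<in> Lie_ideal; fin_supp a\<rbrakk> \<Longrightarrow> pmul a p \<in> Lie_ideal"
| mult_right: "\<lbrakk>p \<in> Lie_ideal; fin_supp a\<rbrakk> \<Longrightarrow> pmul p a \<in> Lie_ideal"

fun mev :: "('k npoly \<Rightarrow> 'k npoly \<Rightarrow> 'k npoly) \<Rightarrow> (nat \<Rightarrow> 'k npoly) \<Rightarrow> mon \<Rightarrow> 'k npoly" where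
  "mev op \<sigma> (V i) = \<sigma> i"
| "mev op \<sigma> (M s t) = op (mev op \<sigma> s) (mev op \<sigma> t)"

definition pev :: "('k::field npoly \<Rightarrow> 'k npoly \<Rightarrow> 'k npoly) \<Rightarrow> (nat \<Rightarrow> 'k npoly) \<Rightarrow> 'k npoly \<Rightarrow> 'k npoly" where
  "pev op \<sigma> f = (\<lambda>u. \<Sum>t\<in>{t. f t \<noteq> 0}. f t * mev op \<sigma> t u)"

text \<open>f is a polynomial identity of (LS_B1<X>, [.,.]): every substitution of elements of
  LS_B1<X> (represented by elements of K{X}), with the product read as the commutator,
  gives zero in LS_B1<X>, i.e. lands in LSB1_ideal.\<close>
definition is_identity_LSB1_comm :: "'k::field npoly \<Rightarrow> bool" where
  "is_identity_LSB1_comm f \<longleftrightarrow>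
     (\<forall>\<sigma>. (\<forall>i. fin_supp (\<sigma> i)) \<longrightarrow> pev pcomm \<sigma> f \<in> LSB1_ideal)"

end

theory Submission
  imports Defs "HOL-Library.Multiset" "HOL-Library.Poly_Mapping" "HOL-Library.Function_Algebras"
begin


definition ind :: "mon \<Rightarrow> 'k::field npoly" where
  "ind t = (\<lambda>u. if u = t then 1 else 0)"

lemma padd_eq: "padd p q = p + q"
  by (simp add: padd_def fun_eq_iff)
lemma psub_eq: "psub p q = p - q"
  by (simp add: psub_def padd_def psc_def fun_eq_iff)
lemma pzero_eq: "pzero = 0"
  by (simp add: pzero_def fun_eq_iff)
lemma psc_apply: "psc c p u = c * p u"
  by (simp add: psc_def)

lemma sum_fun_apply: "(\<Sum>i\<in>S. (f i :: 'a \<Rightarrow> 'b::comm_monoid_add)) x = (\<Sum>i\<in>S. f i x)"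
  by (induction S rule: infinite_finite_induct) auto

lemma sum_list_fun_apply: "(sum_list (xs :: ('a \<Rightarrow> 'b::monoid_add) list)) x = sum_list (map (\<lambda>f. f x) xs)"
  by (induction xs) auto

lemma fin_supp_padd: "fin_supp (p::'k::field npoly) \<Longrightarrow> fin_supp q \<Longrightarrow> fin_supp (p + q)"
  unfolding fin_supp_def
  by (rule finite_subset[of _ "{t. p t \<noteq> 0} \<union> {t. q t \<noteq> 0}"]) auto
lemma fin_supp_psc: "fin_supp p \<Longrightarrow> fin_supp (psc c p)"
  unfolding fin_supp_def psc_def
  by (rule finite_subset[of _ "{t. p t \<noteq> 0}"]) auto
lemma fin_supp_zero: "fin_supp (0::'k::field npoly)"
  by (simp add: fin_supp_def)
lemma fin_supp_uminus: "fin_supp (p::'k::field npoly) \<Longrightarrow> fin_supp (- p)"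
  by (simp add: fin_supp_def)
lemma fin_supp_minus: "fin_supp (p::'k::field npoly) \<Longrightarrow> fin_supp q \<Longrightarrow> fin_supp (p - q)"
  using fin_supp_padd[of p "- q"] fin_supp_uminus[of q] by simp
lemma fin_supp_ind: "fin_supp (ind t)"
  unfolding fin_supp_def ind_def
  by (rule finite_subset[of _ "{t}"]) auto
lemma fin_supp_pmul:
  assumes "fin_supp p" "fin_supp q"
  shows "fin_supp (pmul p q)"
proof -
  have "{t. pmul p q t \<noteq> 0} \<subseteq> (\<lambda>(s,u). M s u) ` ({t. p t \<noteq> 0} \<times> {t. q t \<noteq> 0})"
  proof
    fix t assume "t \<in> {t. pmul p q t \<noteq> 0}"
    then show "t \<in> (\<lambda>(s,u). M s u) ` ({t. p t \<noteq> 0} \<times> {t. q t \<noteq> 0})"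
      by (cases t) (auto simp: pmul_def)
  qed
  then show ?thesis using assms unfolding fin_supp_def
    by (meson finite_SigmaI finite_imageI finite_subset)
qed
lemma fin_supp_sum: "(\<And>i. i \<in> S \<Longrightarrow> fin_supp (f i :: 'k::field npoly)) \<Longrightarrow> fin_supp (\<Sum>i\<in>S. f i)"
  by (induction S rule: infinite_finite_induct) (auto simp: fin_supp_zero fin_supp_padd)
lemma fin_supp_sum_list: "(\<And>p. p \<in> set xs \<Longrightarrow> fin_supp (p::'k::field npoly)) \<Longrightarrow> fin_supp (sum_list xs)"
  by (induction xs) (auto simp: fin_supp_zero fin_supp_padd)

lemma pmul_ind_ind: "pmul (ind s) (ind u) = ind (M s u)"
  by (auto simp: pmul_def ind_def fun_eq_iff split: mon.split)
lemma pmul_add_right: "pmul a (p + q) = pmul a p + pmul a q"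
  by (auto simp: pmul_def fun_eq_iff distrib_left split: mon.split)
lemma pmul_add_left: "pmul (p + q) a = pmul p a + pmul q a"
  by (auto simp: pmul_def fun_eq_iff distrib_right split: mon.split)
lemma pmul_psc_right: "pmul a (psc c p) = psc c (pmul a p)"
  by (auto simp: pmul_def psc_def fun_eq_iff split: mon.split)
lemma pmul_psc_left: "pmul (psc c p) a = psc c (pmul p a)"
  by (auto simp: pmul_def psc_def fun_eq_iff split: mon.split)
lemma pmul_zero_right: "pmul a 0 = 0"
  by (auto simp: pmul_def fun_eq_iff split: mon.split)
lemma pmul_zero_left: "pmul 0 a = 0"
  by (auto simp: pmul_def fun_eq_iff split: mon.split)
lemma pmul_sum_list_right: "pmul a (sum_list xs) = sum_list (map (pmul a) xs)"
  by (induction xs) (simp_all only: list.map sum_list.Cons sum_list.Nil pmul_zero_right pmul_add_right)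
lemma pmul_sum_list_left: "pmul (sum_list xs) a = sum_list (map (\<lambda>p. pmul p a) xs)"
  by (induction xs) (simp_all only: list.map sum_list.Cons sum_list.Nil pmul_zero_left pmul_add_left)

lemma Lie_zero: "0 \<in> Lie_ideal"
  using Lie_ideal.zero by (simp add: pzero_eq)
lemma Lie_add: "p \<in> Lie_ideal \<Longrightarrow> q \<in> Lie_ideal \<Longrightarrow> p + q \<in> Lie_ideal"
  using Lie_ideal.add by (simp add: padd_eq)
lemma Lie_psc: "p \<in> Lie_ideal \<Longrightarrow> psc c p \<in> Lie_ideal"
  using Lie_ideal.smult by blast
lemma Lie_sum_list: "(\<And>p. p \<in> set xs \<Longrightarrow> p \<in> Lie_ideal) \<Longrightarrow> sum_list xs \<in> Lie_ideal"
  by (induction xs) (auto simp: Lie_zero Lie_add)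
lemma Lie_sum: "(\<And>i. i \<in> S \<Longrightarrow> f i \<in> Lie_ideal) \<Longrightarrow> (\<Sum>i\<in>S. f i) \<in> Lie_ideal"
  by (induction S rule: infinite_finite_induct) (auto simp: Lie_zero Lie_add)




type_synonym 'k alg = "(nat \<times> nat) multiset \<Rightarrow>\<^sub>0 'k"

abbreviation lk where "lk \<equiv> Poly_Mapping.lookup"
abbreviation ks where "ks \<equiv> Poly_Mapping.keys"

definition sc :: "'k::field \<Rightarrow> 'k alg \<Rightarrow> 'k alg" where
  "sc c p = Poly_Mapping.single {#} c * p"

lemma lookup_sc: "lk (sc c p) m = c * lk p m"
  unfolding sc_def zero_multiset.abs_eq[symmetric]
  by (simp add: mult_map_scale_conv_mult[symmetric] map.rep_eq when_def)

lemma sc_add: "sc c (p + q) = sc c p + sc c q"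
  by (simp add: sc_def distrib_left)
lemma sc_add_left: "sc (c + d) p = sc c p + sc d p"
  by (simp add: sc_def single_add distrib_right)
lemma sc_mult: "sc c (p * q) = sc c p * q"
  by (simp add: sc_def mult.assoc)
lemma sc_mult_right: "sc c (p * q) = p * sc c q"
  by (simp add: sc_def mult.left_commute)
lemma sc_sc: "sc c (sc d p) = sc (c * d) p"
  by (simp add: sc_def mult.assoc[symmetric] mult_single)
lemma sc_zero[simp]: "sc 0 p = 0"
  by (simp add: sc_def)
lemma sc_zero_right[simp]: "sc c 0 = 0"
  by (simp add: sc_def)
lemma sc_one[simp]: "sc 1 p = p"
  by (simp add: sc_def)
lemma sc_single: "sc c (Poly_Mapping.single m d) = Poly_Mapping.single m (c * d)"
  by (simp add: sc_def mult_single)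
lemma sc_sum: "sc c (\<Sum>i\<in>S. f i) = (\<Sum>i\<in>S. sc c (f i))"
  by (simp add: sc_def sum_distrib_left)
lemma sc_minus: "sc c (p - q) = sc c p - sc c q"
  by (simp add: sc_def right_diff_distrib)
lemma sc_uminus: "sc c (- p) = - sc c p"
  by (simp add: sc_def)
lemma sc_neg1: "sc (-1) p = - p"
  by (simp add: sc_def single_uminus)

lemma poly_mapping_expand:
  "p = (\<Sum>m\<in>ks p. Poly_Mapping.single m (lk p m))"
  by (rule poly_mapping_eqI) (simp add: lookup_sum lookup_single when_def in_keys_iff)

definition sh :: "nat \<times> nat \<Rightarrow> nat \<times> nat" where
  "sh x = (fst x, Suc (snd x))"

definition Dm :: "(nat \<times> nat) multiset \<Rightarrow> 'k::field alg" where
  "Dm m = (\<Sum>x\<in>#m. Poly_Mapping.single (add_mset (sh x) (m - {#x#})) 1)"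

definition Dp :: "'k::field alg \<Rightarrow> 'k alg" where
  "Dp p = (\<Sum>m\<in>ks p. sc (lk p m) (Dm m))"

lemma Dp_superset:
  assumes "finite K" "ks p \<subseteq> K"
  shows "Dp p = (\<Sum>m\<in>K. sc (lk p m) (Dm m))"
  unfolding Dp_def
  by (rule sum.mono_neutral_left) (use assms in \<open>auto simp: in_keys_iff\<close>)

lemma Dp_add: "Dp (p + q) = Dp p + Dp q"
proof -
  have "Dp (p + q) = (\<Sum>m\<in>ks p \<union> ks q. sc (lk (p + q) m) (Dm m))"
    by (rule Dp_superset) (auto simp: keys_add)
  also have "\<dots> = (\<Sum>m\<in>ks p \<union> ks q. sc (lk p m) (Dm m)) + (\<Sum>m\<in>ks p \<union> ks q. sc (lk q m) (Dm m))"
    by (simp add: lookup_add sc_add_left sum.distrib)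
  also have "\<dots> = Dp p + Dp q"
    by (simp add: Dp_superset[symmetric])
  finally show ?thesis .
qed

lemma keys_sc: "ks (sc c p) \<subseteq> ks p"
  by (auto simp: in_keys_iff lookup_sc)

lemma Dp_sc: "Dp (sc c p) = sc c (Dp p)"
proof -
  have "Dp (sc c p) = (\<Sum>m\<in>ks p. sc (lk (sc c p) m) (Dm m))"
    by (rule Dp_superset) (auto simp: keys_sc)
  then show ?thesis
    by (simp add: lookup_sc Dp_def sc_sum sc_sc)
qed

lemma Dp_zero[simp]: "Dp 0 = 0"
  by (simp add: Dp_def)

lemma Dp_single: "Dp (Poly_Mapping.single m c) = sc c (Dm m)"
proof -
  have "Dp (Poly_Mapping.single m c) = (\<Sum>m'\<in>{m}. sc (lk (Poly_Mapping.single m c) m') (Dm m'))"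
    by (rule Dp_superset) auto
  then show ?thesis by simp
qed

lemma Dp_uminus: "Dp (- p) = - Dp p"
  using Dp_sc[of "-1" p] by (simp add: sc_neg1)
lemma Dp_minus: "Dp (p - q) = Dp p - Dp q"
  using Dp_add[of p "- q"] by (simp add: Dp_uminus)
lemma Dp_sum: "Dp (\<Sum>i\<in>S. f i) = (\<Sum>i\<in>S. Dp (f i))"
  by (induction S rule: infinite_finite_induct) (auto simp: Dp_add)

lemma sum_mset_cong': "(\<And>x. x \<in># m \<Longrightarrow> f x = g x) \<Longrightarrow> (\<Sum>x\<in>#m. f x) = (\<Sum>x\<in>#m. g x)"
  by (metis image_mset_cong)

lemma Dm_add: "(Dm (m1 + m2) :: 'k::field alg) = Dm m1 * Poly_Mapping.single m2 1 + Poly_Mapping.single m1 1 * Dm m2"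
proof -
  have 1: "(\<Sum>x\<in>#m1. Poly_Mapping.single (add_mset (sh x) (m1 + m2 - {#x#})) (1::'k))
        = (\<Sum>x\<in>#m1. Poly_Mapping.single (add_mset (sh x) (m1 - {#x#})) 1 * Poly_Mapping.single m2 1)"
    by (rule sum_mset_cong') (simp add: mult_single)
  have 2: "(\<Sum>x\<in>#m2. Poly_Mapping.single (add_mset (sh x) (m1 + m2 - {#x#})) (1::'k))
        = (\<Sum>x\<in>#m2. Poly_Mapping.single m1 1 * Poly_Mapping.single (add_mset (sh x) (m2 - {#x#})) 1)"
    by (rule sum_mset_cong') (simp add: mult_single add.commute)
  show ?thesis
    unfolding Dm_def image_mset_union sum_mset.union 1 2
    by (simp add: sum_mset_distrib_left sum_mset_distrib_right)
qed

lemma Dp_mult_single: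
  "Dp (Poly_Mapping.single m1 c1 * Poly_Mapping.single m2 c2)
   = Dp (Poly_Mapping.single m1 c1) * Poly_Mapping.single m2 c2 + Poly_Mapping.single m1 c1 * Dp (Poly_Mapping.single m2 (c2::'k::field))"
proof -
  have "Dp (Poly_Mapping.single m1 c1 * Poly_Mapping.single m2 c2) = sc (c1 * c2) (Dm (m1 + m2))"
    by (simp add: mult_single Dp_single)
  also have "\<dots> = sc c1 (Dm m1) * Poly_Mapping.single m2 c2 + Poly_Mapping.single m1 c1 * sc c2 (Dm m2)"
    by (simp add: Dm_add sc_def mult_single algebra_simps)
  finally show ?thesis by (simp add: Dp_single)
qed

lemma Dp_mult: "Dp (p * q) = Dp p * q + p * Dp (q :: 'k::field alg)"
proof -
  let ?s = "\<lambda>p m. Poly_Mapping.single m (lk p m) :: 'k alg"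
  have "p * q = (\<Sum>m1\<in>ks p. ?s p m1) * (\<Sum>m2\<in>ks q. ?s q m2)"
    using poly_mapping_expand[of p] poly_mapping_expand[of q] by simp
  also have "\<dots> = (\<Sum>m1\<in>ks p. \<Sum>m2\<in>ks q. ?s p m1 * ?s q m2)"
    by (rule sum_product)
  finally have pq: "p * q = (\<Sum>m1\<in>ks p. \<Sum>m2\<in>ks q. ?s p m1 * ?s q m2)" .
  have "Dp (p * q) = (\<Sum>m1\<in>ks p. \<Sum>m2\<in>ks q. Dp (?s p m1) * ?s q m2 + ?s p m1 * Dp (?s q m2))"
    unfolding pq Dp_sum Dp_mult_single ..
  also have "\<dots> = (\<Sum>m1\<in>ks p. Dp (?s p m1)) * (\<Sum>m2\<in>ks q. ?s q m2) + (\<Sum>m1\<in>ks p. ?s p m1) * (\<Sum>m2\<in>ks q. Dp (?s q m2))"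
    by (simp add: sum.distrib sum_product)
  also have "\<dots> = Dp p * q + p * Dp q"
    by (simp add: Dp_sum[symmetric] poly_mapping_expand[symmetric])
  finally show ?thesis .
qed

definition nov :: "'k::field alg \<Rightarrow> 'k alg \<Rightarrow> 'k alg" where
  "nov a b = a * Dp b"

lemma nov_lsym: "nov (nov a b) c - nov a (nov b c) - (nov (nov b a) c - nov b (nov a c)) = 0"
  by (simp add: nov_def Dp_mult algebra_simps)

lemma nov_B1: "nov (nov a b) c - nov (nov b a) c + ((nov (nov c a) b - nov (nov a c) b) + (nov (nov b c) a - nov (nov c b) a)) = 0"
  by (simp add: nov_def algebra_simps)




fun Hm :: "mon \<Rightarrow> 'k::field alg" where
  "Hm (V i) = Poly_Mapping.single {#(i,0)#} 1"
| "Hm (M s u) = nov (Hm s) (Hm u)"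

definition Hp :: "'k::field npoly \<Rightarrow> 'k alg" where
  "Hp p = (\<Sum>t\<in>{t. p t \<noteq> 0}. sc (p t) (Hm t))"

lemma Hp_superset:
  assumes "finite T" "{t. p t \<noteq> 0} \<subseteq> T"
  shows "Hp p = (\<Sum>t\<in>T. sc (p t) (Hm t))"
  unfolding Hp_def
  by (rule sum.mono_neutral_left) (use assms in auto)

lemma Hp_add:
  assumes "fin_supp p" "fin_supp q"
  shows "Hp (p + q) = Hp p + Hp q"
proof -
  let ?T = "{t. p t \<noteq> 0} \<union> {t. q t \<noteq> 0}"
  have fT: "finite ?T" using assms by (simp add: fin_supp_def)
  have "Hp (p + q) = (\<Sum>t\<in>?T. sc ((p + q) t) (Hm t))"
    by (rule Hp_superset[OF fT]) auto
  also have "\<dots> = (\<Sum>t\<in>?T. sc (p t) (Hm t)) + (\<Sum>t\<in>?T. sc (q t) (Hm t))"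
    by (simp add: sc_add_left sum.distrib)
  also have "\<dots> = Hp p + Hp q"
    using fT by (simp add: Hp_superset[symmetric])
  finally show ?thesis .
qed

lemma Hp_psc:
  assumes "fin_supp p"
  shows "Hp (psc c p) = sc c (Hp p)"
proof -
  have fT: "finite {t. p t \<noteq> 0}" using assms by (simp add: fin_supp_def)
  have "Hp (psc c p) = (\<Sum>t\<in>{t. p t \<noteq> 0}. sc (psc c p t) (Hm t))"
    by (rule Hp_superset[OF fT]) (auto simp: psc_def)
  then show ?thesis by (simp add: psc_def Hp_def sc_sum sc_sc)
qed

lemma Hp_zero[simp]: "Hp 0 = 0"
  by (simp add: Hp_def)

lemma uminus_psc: "- p = psc (-1) (p::'k::field npoly)"
  by (simp add: psc_def fun_eq_iff)

lemma Hp_uminus: "fin_supp p \<Longrightarrow> Hp (- p) = - Hp p"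
  using Hp_psc[of p "-1"] by (simp add: sc_neg1 uminus_psc[symmetric])

lemma Hp_minus: "fin_supp p \<Longrightarrow> fin_supp q \<Longrightarrow> Hp (p - q) = Hp p - Hp q"
  using Hp_add[of p "- q"] Hp_uminus[of q] fin_supp_uminus[of q] by simp

lemma Hp_sum: "finite S \<Longrightarrow> (\<And>i. i \<in> S \<Longrightarrow> fin_supp (f i)) \<Longrightarrow> Hp (\<Sum>i\<in>S. f i) = (\<Sum>i\<in>S. Hp (f i))"
  by (induction S rule: finite_induct) (auto simp: Hp_add fin_supp_sum)

lemma Hp_ind: "Hp (ind t) = Hm t"
proof -
  have "Hp (ind t) = (\<Sum>t'\<in>{t}. sc (ind t t') (Hm t'))"
    by (rule Hp_superset) (auto simp: ind_def)
  then show ?thesis by (simp add: ind_def)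
qed

lemma Hp_pmul:
  assumes "fin_supp p" "fin_supp q"
  shows "Hp (pmul p q) = nov (Hp p) (Hp q)"
proof -
  let ?P = "{t. p t \<noteq> 0}" and ?Q = "{t. q t \<noteq> 0}"
  have fP: "finite ?P" and fQ: "finite ?Q" using assms by (auto simp: fin_supp_def)
  let ?f = "\<lambda>(s,u). M s u"
  have inj: "inj_on ?f (?P \<times> ?Q)" by (auto simp: inj_on_def)
  have sub: "{t. pmul p q t \<noteq> 0} \<subseteq> ?f ` (?P \<times> ?Q)"
  proof
    fix t assume "t \<in> {t. pmul p q t \<noteq> 0}"
    then show "t \<in> ?f ` (?P \<times> ?Q)"
      by (cases t) (auto simp: pmul_def)
  qed
  have "Hp (pmul p q) = (\<Sum>t\<in>?f ` (?P \<times> ?Q). sc (pmul p q t) (Hm t))"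
    by (rule Hp_superset[OF _ sub]) (use fP fQ in auto)
  also have "\<dots> = (\<Sum>(s,u)\<in>?P \<times> ?Q. sc (p s * q u) (Hm (M s u)))"
    by (subst sum.reindex[OF inj]) (simp add: pmul_def case_prod_beta)
  also have "\<dots> = (\<Sum>s\<in>?P. \<Sum>u\<in>?Q. sc (p s) (Hm s) * Dp (sc (q u) (Hm u)))"
    unfolding sum.cartesian_product
    by (intro sum.cong refl) (auto simp: nov_def Dp_sc sc_sc sc_mult[symmetric] sc_mult_right[symmetric] mult.commute)
  also have "\<dots> = (\<Sum>s\<in>?P. sc (p s) (Hm s)) * Dp (\<Sum>u\<in>?Q. sc (q u) (Hm u))"
    by (simp add: Dp_sum sum_product)
  also have "\<dots> = nov (Hp p) (Hp q)"
    by (simp add: Hp_def nov_def)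
  finally show ?thesis .
qed

lemma LSB1_kill: "p \<in> LSB1_ideal \<Longrightarrow> fin_supp p \<and> Hp p = 0"
proof (induction rule: LSB1_ideal.induct)
  case (gen_ls a b c)
  have "fin_supp (lsym_rel a b c)"
    using gen_ls by (simp add: lsym_rel_def passoc_def psub_eq fin_supp_pmul fin_supp_minus)
  moreover have "Hp (lsym_rel a b c) = 0"
    using gen_ls nov_lsym
    by (simp add: lsym_rel_def passoc_def psub_eq Hp_minus fin_supp_pmul fin_supp_minus Hp_pmul)
  ultimately show ?case by blast
next
  case (gen_B1 a b c)
  have "fin_supp (B1_rel a b c)"
    using gen_B1 by (simp add: B1_rel_def psub_eq padd_eq fin_supp_pmul fin_supp_minus fin_supp_padd)
  moreover have "Hp (B1_rel a b c) = 0"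
    using gen_B1 nov_B1
    by (simp add: B1_rel_def psub_eq padd_eq Hp_add Hp_minus fin_supp_pmul fin_supp_minus fin_supp_padd Hp_pmul)
  ultimately show ?case by blast
next
  case zero
  show ?case by (simp add: pzero_def fin_supp_def Hp_def)
next
  case (add p q)
  then have "fin_supp p" "Hp p = 0" "fin_supp q" "Hp q = 0" by auto
  then show ?case unfolding padd_eq using Hp_add[of p q] fin_supp_padd[of p q] by (simp add: plus_fun_def)
next
  case (smult p c)
  then show ?case by (simp add: Hp_psc fin_supp_psc)
next
  case (mult_left p a)
  then show ?case by (simp add: Hp_pmul fin_supp_pmul nov_def)
next
  case (mult_right p a)
  then show ?case by (simp add: Hp_pmul fin_supp_pmul nov_def)
qed

fun Ec :: "mon \<Rightarrow> 'k::field alg" where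
  "Ec (V i) = Poly_Mapping.single {#(i,0)#} 1"
| "Ec (M s u) = nov (Ec s) (Ec u) - nov (Ec u) (Ec s)"

definition sig :: "nat \<Rightarrow> 'k::field npoly" where
  "sig i = ind (V i)"

lemma pcomm_eq: "pcomm p q = pmul p q - pmul q p"
  by (simp add: pcomm_def psub_eq)

lemma mev_Ec: "fin_supp (mev pcomm sig t :: 'k::field npoly) \<and> Hp (mev pcomm sig t :: 'k npoly) = Ec t"
proof (induction t)
  case (V i)
  show ?case by (simp add: sig_def fin_supp_ind Hp_ind)
next
  case (M s u)
  have e: "mev pcomm sig (M s u) = pmul (mev pcomm sig s) (mev pcomm sig u) - pmul (mev pcomm sig u) (mev pcomm sig (s::mon) :: 'k npoly)"
    by (simp only: mev.simps pcomm_eq)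
  from M have a: "fin_supp (mev pcomm sig s :: 'k npoly)" "fin_supp (mev pcomm sig u :: 'k npoly)"
    "Hp (mev pcomm sig s :: 'k npoly) = Ec s" "Hp (mev pcomm sig u :: 'k npoly) = Ec u" by auto
  have f: "fin_supp (pmul (mev pcomm sig s) (mev pcomm sig u) - pmul (mev pcomm sig u) (mev pcomm sig (s::mon) :: 'k npoly))"
    using a by (simp add: fin_supp_minus fin_supp_pmul)
  have h: "Hp (pmul (mev pcomm sig s) (mev pcomm sig u) - pmul (mev pcomm sig u) (mev pcomm sig (s::mon) :: 'k npoly)) = Ec (M s u)"
    using a by (simp add: fin_supp_pmul Hp_minus Hp_pmul)
  show ?case unfolding e using f h by blast
qed

lemma pev_sum: "pev pcomm sig f = (\<Sum>t\<in>{t. f t \<noteq> 0}. psc (f t) (mev pcomm sig t))"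
  by (simp add: pev_def fun_eq_iff sum_fun_apply psc_def)

lemma Hp_pev:
  assumes "fin_supp f"
  shows "Hp (pev pcomm sig f) = (\<Sum>t\<in>{t. f t \<noteq> 0}. sc (f t) (Ec t :: 'k::field alg))"
proof -
  have "finite {t. f t \<noteq> 0}" using assms by (simp add: fin_supp_def)
  then show ?thesis
    unfolding pev_sum
    by (simp add: Hp_sum fin_supp_psc mev_Ec Hp_psc)
qed

lemma identity_Ec:
  assumes "fin_supp (f :: 'k::field npoly)" "is_identity_LSB1_comm f"
  shows "(\<Sum>t\<in>{t. f t \<noteq> 0}. sc (f t) (Ec t :: 'k alg)) = 0"
proof -
  have "\<forall>i. fin_supp (sig i :: 'k npoly)" by (simp add: sig_def fin_supp_ind)
  then have "pev pcomm sig f \<in> LSB1_ideal"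
    using assms(2) unfolding is_identity_LSB1_comm_def by blast
  then have "Hp (pev pcomm sig f) = 0" using LSB1_kill by blast
  then show ?thesis using Hp_pev[OF assms(1)] by simp
qed




section \<open>Permutation sums\<close>

definition del :: "nat \<Rightarrow> 'a list \<Rightarrow> 'a list" where
  "del i l = take i l @ drop (Suc i) l"

lemma length_del: "i < length l \<Longrightarrow> length (del i l) < length l"
  by (simp add: del_def)

lemma mset_del: "i < length l \<Longrightarrow> mset (del i l) = mset l - {#l ! i#}"
proof -
  assume i: "i < length l"
  have "mset l = mset (take i l @ l!i # drop (Suc i) l)"
    using id_take_nth_drop[OF i] by simp
  then show ?thesis by (simp add: del_def)
qed

function perms :: "'a list \<Rightarrow> 'a list list" where
  "perms [] = [[]]"
| "perms (x # xs) = concat (map (\<lambda>i. map (Cons ((x#xs) ! i)) (perms (del i (x#xs)))) [0..<length (x#xs)])"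
  by pat_completeness auto
termination
  by (relation "measure length") (auto simp: del_def)

lemma perms_nonempty: "l \<noteq> [] \<Longrightarrow> perms l = concat (map (\<lambda>i. map (Cons (l ! i)) (perms (del i l))) [0..<length l])"
  by (cases l) auto

definition Pg :: "('a list \<Rightarrow> 'b::comm_monoid_add) \<Rightarrow> 'a list \<Rightarrow> 'b" where
  "Pg G l = sum_list (map G (perms l))"

lemma sum_list_concat_map: "sum_list (concat (map f xs)) = sum_list (map (\<lambda>x. sum_list (f x)) xs)"
  by (induction xs) auto

lemma Pg_step: "l \<noteq> [] \<Longrightarrow> Pg G l = sum_list (map (\<lambda>i. Pg (\<lambda>r. G (l ! i # r)) (del i l)) [0..<length l])"
  by (simp add: Pg_def perms_nonempty map_concat sum_list_concat_map comp_def)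

lemma map_nth_eq: "map (\<lambda>i. f (l ! i)) [0..<length l] = map f l"
  by (rule nth_equalityI) auto

lemma Pg_mset:
  "Pg G l = (if l = [] then G [] else (\<Sum>x\<in>#mset l. Pg (\<lambda>r. G (x#r)) (SOME l'. mset l' = mset l - {#x#})))"
proof (induction "length l" arbitrary: l G rule: less_induct)
  case less
  show ?case
  proof (cases "l = []")
    case True then show ?thesis by (simp add: Pg_def)
  next
    case False
    let ?Q = "\<lambda>x. Pg (\<lambda>r. G (x#r)) (SOME l'. mset l' = mset l - {#x#})"
    have eq: "Pg (\<lambda>r. G (l ! i # r)) (del i l) = ?Q (l ! i)" if i: "i < length l" for i
    proof -
      have m: "mset (del i l) = mset l - {#l ! i#}" using mset_del[OF i] .
      let ?l' = "SOME l'. mset l' = mset l - {#l ! i#}"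
      have ex: "mset ?l' = mset l - {#l ! i#}"
        by (rule someI_ex) (rule exI[of _ "del i l"], rule m)
      have "Pg (\<lambda>r. G (l ! i # r)) (del i l) = Pg (\<lambda>r. G (l ! i # r)) ?l'"
      proof (cases "del i l = []")
        case True
        then have "?l' = []" using ex m by simp
        then show ?thesis using True by simp
      next
        case False
        have mm: "mset (del i l) = mset ?l'" using ex m by simp
        then have ne: "?l' \<noteq> []" using False by auto
        have len: "length ?l' < length l"
          using arg_cong[OF mm, of size] length_del[OF i] by simp
        have "Pg (\<lambda>r. G (l ! i # r)) (del i l) = (\<Sum>x\<in>#mset (del i l). Pg (\<lambda>r. G (l ! i # x # r)) (SOME l''. mset l'' = mset (del i l) - {#x#}))"
          using less(1)[OF length_del[OF i], of "\<lambda>r. G (l ! i # r)"] False by (simp only: if_False)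
        also have "\<dots> = (\<Sum>x\<in>#mset ?l'. Pg (\<lambda>r. G (l ! i # x # r)) (SOME l''. mset l'' = mset ?l' - {#x#}))"
          unfolding mm ..
        also have "\<dots> = Pg (\<lambda>r. G (l ! i # r)) ?l'"
          using less(1)[OF len, of "\<lambda>r. G (l ! i # r)"] ne by (simp only: if_False)
        finally show ?thesis .
      qed
      then show ?thesis by simp
    qed
    have mapeq: "map (\<lambda>i. Pg (\<lambda>r. G (l ! i # r)) (del i l)) [0..<length l] = map (\<lambda>i. ?Q (l ! i)) [0..<length l]"
      by (rule map_cong[OF refl]) (use eq in auto)
    have s: "Pg G l = sum_list (map (\<lambda>i. Pg (\<lambda>r. G (l ! i # r)) (del i l)) [0..<length l])"
      by (rule Pg_step[OF False])
    have "Pg G l = sum_list (map (\<lambda>i. ?Q (l ! i)) [0..<length l])"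
      unfolding s mapeq ..
    also have "\<dots> = sum_list (map ?Q l)"
      using map_nth_eq[of ?Q l] by simp
    also have "\<dots> = (\<Sum>x\<in>#mset l. ?Q x)"
      by (simp only: sum_mset_sum_list[symmetric] mset_map)
    finally show ?thesis using False by simp
  qed
qed

lemma Pg_invariant: "mset l = mset l' \<Longrightarrow> Pg G l = Pg G l'"
  by (subst (1 2) Pg_mset) auto

definition PM :: "((nat \<times> nat) list \<Rightarrow> 'b::comm_monoid_add) \<Rightarrow> (nat \<times> nat) multiset \<Rightarrow> 'b" where
  "PM G m = Pg G (SOME l. mset l = m)"

lemma PM_mset: "PM G (mset l) = Pg G l"
  unfolding PM_def
  by (rule Pg_invariant) (rule someI_ex, blast)

section \<open>The retraction Psi\<close>

definition evalC :: "(int \<times> mon) list \<Rightarrow> 'k::field npoly" where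
  "evalC xs = sum_list (map (\<lambda>(c,T). psc (of_int c) (ind T)) xs)"

definition gsym :: "(nat \<times> nat) list \<Rightarrow> (int \<times> mon) list" where
  "gsym l = (if length l = 1 \<and> snd (l!0) = 0 then [(12, V (fst (l!0)))]
    else if length l = 2 \<and> snd (l!0) = 1 \<and> snd (l!1) = 0 then [(-6, M (V (fst (l!0))) (V (fst (l!1))))]
    else if length l = 3 \<and> snd (l!0) = 2 \<and> snd (l!1) = 0 \<and> snd (l!2) = 0
      then [(4, M (M (V (fst (l!0))) (V (fst (l!1)))) (V (fst (l!2))))]
    else if length l = 4 \<and> snd (l!0) = 2 \<and> snd (l!1) = 1 \<and> snd (l!2) = 0 \<and> snd (l!3) = 0
      then [(-3, M (M (M (V (fst (l!0))) (V (fst (l!1)))) (V (fst (l!2)))) (V (fst (l!3))))]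
    else [])"

definition Psi :: "'k::field alg \<Rightarrow> 'k npoly" where
  "Psi p = (\<Sum>m\<in>ks p. psc (lk p m) (PM (\<lambda>l. evalC (gsym l)) m))"

lemma psc_zero[simp]: "psc 0 p = 0"
  by (simp add: psc_def fun_eq_iff)
lemma psc_zero_right[simp]: "psc c 0 = 0"
  by (simp add: psc_def fun_eq_iff)
lemma psc_add_left: "psc (c + d) p = psc c p + psc d p"
  by (simp add: psc_def fun_eq_iff distrib_right)
lemma psc_add: "psc c (p + q) = psc c p + psc c q"
  by (simp add: psc_def fun_eq_iff distrib_left)
lemma psc_psc: "psc c (psc d p) = psc (c * d) p"
  by (simp add: psc_def fun_eq_iff)
lemma psc_one[simp]: "psc 1 p = p"
  by (simp add: psc_def fun_eq_iff)
lemma psc_sum: "psc c (\<Sum>i\<in>S. f i) = (\<Sum>i\<in>S. psc c (f i))"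
  by (simp add: psc_def fun_eq_iff sum_fun_apply sum_distrib_left)
lemma psc_sum_list: "psc c (sum_list xs) = sum_list (map (psc c) xs)"
  by (induction xs) (simp_all only: list.map sum_list.Cons sum_list.Nil psc_add psc_zero_right)
lemma psc_uminus: "psc c (- p) = - psc c p"
  by (simp add: psc_def fun_eq_iff)
lemma psc_neg1: "psc (-1) p = - p"
  by (simp add: psc_def fun_eq_iff)

lemma Psi_superset:
  assumes "finite K" "ks p \<subseteq> K"
  shows "Psi p = (\<Sum>m\<in>K. psc (lk p m) (PM (\<lambda>l. evalC (gsym l)) m))"
  unfolding Psi_def
  by (rule sum.mono_neutral_left) (use assms in \<open>auto simp: in_keys_iff\<close>)

lemma Psi_add: "Psi (p + q) = Psi p + Psi q"
proof -
  have "Psi (p + q) = (\<Sum>m\<in>ks p \<union> ks q. psc (lk (p + q) m) (PM (\<lambda>l. evalC (gsym l)) m))"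
    by (rule Psi_superset) (auto simp: keys_add)
  also have "\<dots> = Psi p + Psi q"
    by (simp add: lookup_add psc_add_left sum.distrib Psi_superset[symmetric])
  finally show ?thesis .
qed

lemma Psi_zero[simp]: "Psi 0 = 0"
  by (simp add: Psi_def)

lemma Psi_sc: "Psi (sc c p) = psc c (Psi p)"
proof -
  have "Psi (sc c p) = (\<Sum>m\<in>ks p. psc (lk (sc c p) m) (PM (\<lambda>l. evalC (gsym l)) m))"
    by (rule Psi_superset) (auto simp: keys_sc)
  then show ?thesis by (simp add: lookup_sc Psi_def psc_sum psc_psc)
qed

lemma Psi_sum: "Psi (\<Sum>i\<in>S. f i) = (\<Sum>i\<in>S. Psi (f i))"
  by (induction S rule: infinite_finite_induct) (auto simp: Psi_add)

lemma Psi_sum_list: "Psi (sum_list xs) = sum_list (map Psi xs)"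
  by (induction xs) (auto simp: Psi_add)

lemma Psi_single: "Psi (Poly_Mapping.single m c) = psc c (PM (\<lambda>l. evalC (gsym l)) m)"
proof -
  have "Psi (Poly_Mapping.single m c) = (\<Sum>m'\<in>{m}. psc (lk (Poly_Mapping.single m c) m') (PM (\<lambda>l. evalC (gsym l)) m'))"
    by (rule Psi_superset) auto
  then show ?thesis by simp
qed

lemma Psi_uminus: "Psi (- p) = - Psi p"
  using Psi_sc[of "-1" p] by (simp add: sc_neg1 psc_neg1)




definition toA :: "(int \<times> (nat \<times> nat) list) list \<Rightarrow> 'k::field alg" where
  "toA xs = sum_list (map (\<lambda>(c,l). Poly_Mapping.single (mset l) (of_int c)) xs)"

definition mulS :: "(int \<times> (nat \<times> nat) list) list \<Rightarrow> (int \<times> (nat \<times> nat) list) list \<Rightarrow> (int \<times> (nat \<times> nat) list) list" where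
  "mulS xs ys = concat (map (\<lambda>(c1,l1). map (\<lambda>(c2,l2). (c1 * c2, l1 @ l2)) ys) xs)"

definition DS :: "(int \<times> (nat \<times> nat) list) list \<Rightarrow> (int \<times> (nat \<times> nat) list) list" where
  "DS xs = concat (map (\<lambda>(c,l). map (\<lambda>i. (c, l[i := sh (l ! i)])) [0..<length l]) xs)"

definition negS :: "('a \<times> 'b) list \<Rightarrow> ('a::uminus \<times> 'b) list" where
  "negS xs = map (\<lambda>(c,l). (- c, l)) xs"

fun Ec_sym :: "mon \<Rightarrow> (int \<times> (nat \<times> nat) list) list" where
  "Ec_sym (V i) = [(1, [(i,0)])]"
| "Ec_sym (M s u) = mulS (Ec_sym s) (DS (Ec_sym u)) @ negS (mulS (Ec_sym u) (DS (Ec_sym s)))"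

lemma toA_Nil[simp]: "toA [] = 0"
  by (simp add: toA_def)
lemma toA_Cons: "toA ((c,l) # xs) = Poly_Mapping.single (mset l) (of_int c) + toA xs"
  by (simp add: toA_def)
lemma toA_append: "toA (xs @ ys) = toA xs + toA ys"
  by (simp add: toA_def)
lemma toA_concat: "toA (concat xss) = sum_list (map toA xss)"
  by (induction xss) (auto simp: toA_append)
lemma toA_negS: "toA (negS xs) = - toA xs"
  by (induction xs) (auto simp: negS_def toA_def single_uminus)

lemma toA_mul_single: "Poly_Mapping.single (mset l1) (of_int c1) * toA ys = toA (map (\<lambda>(c2,l2). (c1 * c2, l1 @ l2)) ys)"
  by (induction ys) (auto simp: toA_def distrib_left mult_single)

lemma toA_mulS: "toA (mulS xs ys) = toA xs * toA ys"
  by (induction xs) (auto simp: mulS_def toA_append toA_Cons distrib_right toA_mul_single)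

lemma Dm_mset: "Dm (mset l) = sum_list (map (\<lambda>i. Poly_Mapping.single (mset (l[i := sh (l ! i)])) 1) [0..<length l])"
proof -
  let ?F = "\<lambda>x. Poly_Mapping.single (add_mset (sh x) (mset l - {#x#})) (1::'a)"
  have "Dm (mset l) = sum_list (map ?F l)"
    unfolding Dm_def by (simp only: sum_mset_sum_list[symmetric] mset_map)
  also have "\<dots> = sum_list (map (\<lambda>i. ?F (l ! i)) [0..<length l])"
    using map_nth_eq[of ?F l] by simp
  also have "\<dots> = sum_list (map (\<lambda>i. Poly_Mapping.single (mset (l[i := sh (l ! i)])) 1) [0..<length l])"
    by (rule arg_cong[where f = sum_list], rule map_cong[OF refl]) (simp add: mset_update)
  finally show ?thesis .
qed

lemma sc_sum_list: "sc c (sum_list xs) = sum_list (map (sc c) xs)"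
  by (induction xs) (auto simp: sc_add)

lemma Dp_sum_list: "Dp (sum_list xs) = sum_list (map Dp xs)"
  by (induction xs) (auto simp: Dp_add)

lemma toA_DS: "toA (DS xs) = Dp (toA xs)"
proof (induction xs)
  case Nil then show ?case by (simp add: DS_def)
next
  case (Cons a xs)
  obtain c l where a: "a = (c,l)" by force
  have "toA (map (\<lambda>i. (c, l[i := sh (l ! i)])) [0..<length l]) = Dp (Poly_Mapping.single (mset l) (of_int c))"
    by (simp add: Dp_single Dm_mset sc_sum_list toA_def sc_single comp_def)
  then show ?case using Cons by (simp add: a DS_def toA_append toA_Cons Dp_add)
qed

lemma Ec_toA: "Ec t = toA (Ec_sym t)"
  by (induction t) (simp_all add: toA_Cons nov_def toA_append toA_negS toA_mulS toA_DS)

lemma evalC_Nil[simp]: "evalC [] = 0"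
  by (simp add: evalC_def)
lemma evalC_append: "evalC (xs @ ys) = evalC xs + evalC ys"
  by (simp add: evalC_def)
lemma evalC_concat: "evalC (concat xss) = sum_list (map evalC xss)"
  by (induction xss) (auto simp: evalC_append)
lemma evalC_scale: "psc (of_int c) (evalC ys) = evalC (map (\<lambda>(d,T). (c * d, T)) ys)"
  unfolding evalC_def psc_sum_list map_map
  by (rule arg_cong[where f=sum_list], rule map_cong) (auto simp: psc_psc)

definition PS :: "(int \<times> (nat \<times> nat) list) list \<Rightarrow> (int \<times> mon) list" where
  "PS xs = concat (map (\<lambda>(c,l). map (\<lambda>(d,T). (c * d, T)) (concat (map gsym (perms l)))) xs)"

lemma Pg_evalC: "Pg (\<lambda>l. evalC (gsym l)) l = evalC (concat (map gsym (perms l)))"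
  by (simp add: Pg_def evalC_concat comp_def)

lemma Psi_toA: "Psi (toA xs) = evalC (PS xs)"
proof (induction xs)
  case Nil then show ?case by (simp add: PS_def toA_def)
next
  case (Cons a xs)
  obtain c l where a: "a = (c,l)" by force
  show ?case using Cons
    by (simp add: a toA_Cons Psi_add Psi_single PM_mset Pg_evalC evalC_scale PS_def evalC_append)
qed

lemma Psi_Ec: "Psi (Ec t) = evalC (PS (Ec_sym t))"
  by (simp add: Ec_toA Psi_toA)




fun mren :: "(nat \<Rightarrow> nat) \<Rightarrow> mon \<Rightarrow> mon" where
  "mren \<rho> (V i) = V (\<rho> i)"
| "mren \<rho> (M s u) = M (mren \<rho> s) (mren \<rho> u)"

datatype rel = RA mon mon | RJ mon mon mon | RL mon rel | RR rel mon

fun rlist :: "rel \<Rightarrow> (int \<times> mon) list" where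
  "rlist (RA x y) = [(1, M x y), (1, M y x)]"
| "rlist (RJ x y z) = [(1, M (M x y) z), (1, M (M y z) x), (1, M (M z x) y)]"
| "rlist (RL w r) = map (\<lambda>(c,T). (c, M w T)) (rlist r)"
| "rlist (RR r w) = map (\<lambda>(c,T). (c, M T w)) (rlist r)"

fun rren :: "(nat \<Rightarrow> nat) \<Rightarrow> rel \<Rightarrow> rel" where
  "rren \<rho> (RA x y) = RA (mren \<rho> x) (mren \<rho> y)"
| "rren \<rho> (RJ x y z) = RJ (mren \<rho> x) (mren \<rho> y) (mren \<rho> z)"
| "rren \<rho> (RL w r) = RL (mren \<rho> w) (rren \<rho> r)"
| "rren \<rho> (RR r w) = RR (rren \<rho> r) (mren \<rho> w)"

lemma evalC_Cons: "evalC ((c,T) # xs) = psc (of_int c) (ind T) + evalC xs"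
  by (simp add: evalC_def)

lemma evalC_map_left: "evalC (map (\<lambda>(c,T). (c, M w T)) xs) = pmul (ind w) (evalC xs)"
proof (induction xs)
  case Nil show ?case by (simp only: list.map evalC_Nil pmul_zero_right)
next
  case (Cons a xs)
  obtain c T where a: "a = (c,T)" by force
  show ?case unfolding a list.map prod.case evalC_Cons Cons pmul_add_right pmul_psc_right pmul_ind_ind ..
qed

lemma evalC_map_right: "evalC (map (\<lambda>(c,T). (c, M T w)) xs) = pmul (evalC xs) (ind w)"
proof (induction xs)
  case Nil show ?case by (simp only: list.map evalC_Nil pmul_zero_left)
next
  case (Cons a xs)
  obtain c T where a: "a = (c,T)" by force
  show ?case unfolding a list.map prod.case evalC_Cons Cons pmul_add_left pmul_psc_left pmul_ind_ind ..
qed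

lemma rlist_Lie: "evalC (rlist r) \<in> Lie_ideal"
proof (induction r)
  case (RA x y)
  have e: "evalC (rlist (RA x y)) = padd (pmul (ind x) (ind y)) (pmul (ind y) (ind x))"
    by (simp add: evalC_Cons pmul_ind_ind padd_eq)
  show ?case unfolding e by (rule Lie_ideal.gen_anti[OF fin_supp_ind fin_supp_ind])
next
  case (RJ x y z)
  have e: "evalC (rlist (RJ x y z)) = padd (pmul (pmul (ind x) (ind y)) (ind z)) (padd (pmul (pmul (ind y) (ind z)) (ind x)) (pmul (pmul (ind z) (ind x)) (ind y)))"
    by (simp add: evalC_Cons pmul_ind_ind padd_eq add.assoc)
  show ?case unfolding e by (rule Lie_ideal.gen_jac[OF fin_supp_ind fin_supp_ind fin_supp_ind])
next
  case (RL w r)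
  then show ?case by (simp add: evalC_map_left Lie_ideal.mult_left fin_supp_ind)
next
  case (RR r w)
  then show ?case by (simp add: evalC_map_right Lie_ideal.mult_right fin_supp_ind)
qed

definition CL :: "(int \<times> rel) list \<Rightarrow> (int \<times> mon) list" where
  "CL cert = concat (map (\<lambda>(c,r). map (\<lambda>(d,T). (c * d, T)) (rlist r)) cert)"

lemma CL_Lie: "evalC (CL cert) \<in> Lie_ideal"
  unfolding CL_def evalC_concat
proof (rule Lie_sum_list)
  fix p assume "p \<in> set (map evalC (map (\<lambda>(c,r). map (\<lambda>(d,T). (c * d, T)) (rlist r)) cert))"
  then obtain c r where p: "p = evalC (map (\<lambda>(d,T). (c * d, T)) (rlist r))" by auto
  show "p \<in> Lie_ideal" unfolding p evalC_scale[symmetric] by (rule Lie_psc, rule rlist_Lie)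
qed

lemma rlist_rren: "rlist (rren \<rho> r) = map (\<lambda>(c,T). (c, mren \<rho> T)) (rlist r)"
  by (induction r) auto

lemma CL_rren: "CL (map (\<lambda>(c,r). (c, rren \<rho> r)) cert) = map (\<lambda>(c,T). (c, mren \<rho> T)) (CL cert)"
  by (induction cert) (auto simp: CL_def rlist_rren)

definition rp :: "(nat \<Rightarrow> nat) \<Rightarrow> nat \<times> nat \<Rightarrow> nat \<times> nat" where
  "rp \<rho> x = (\<rho> (fst x), snd x)"

lemma rp_sh: "rp \<rho> (sh x) = sh (rp \<rho> x)"
  by (simp add: rp_def sh_def)

lemma mulS_ren: "mulS (map (\<lambda>(c,l). (c, map (rp \<rho>) l)) xs) (map (\<lambda>(c,l). (c, map (rp \<rho>) l)) ys)
   = map (\<lambda>(c,l). (c, map (rp \<rho>) l)) (mulS xs ys)"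
  by (simp add: mulS_def map_concat comp_def case_prod_beta)

lemma DS_ren_aux: "map (\<lambda>i. (c, (map (rp \<rho>) l)[i := sh (map (rp \<rho>) l ! i)])) [0..<length l] = map (\<lambda>i. (c, map (rp \<rho>) (l[i := sh (l ! i)]))) [0..<length l]"
  by (rule map_cong) (auto simp: map_update rp_sh)

lemma DS_ren: "DS (map (\<lambda>(c,l). (c, map (rp \<rho>) l)) xs) = map (\<lambda>(c,l). (c, map (rp \<rho>) l)) (DS xs)"
  unfolding DS_def map_concat map_map comp_def case_prod_beta
  by (simp add: DS_ren_aux)

lemma negS_ren: "negS (map (\<lambda>(c,l). (c, map (rp \<rho>) l)) xs) = map (\<lambda>(c,l). (c, map (rp \<rho>) l)) (negS xs)"
  by (simp add: negS_def comp_def case_prod_beta)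

lemma Ec_sym_ren: "Ec_sym (mren \<rho> t) = map (\<lambda>(c,l). (c, map (rp \<rho>) l)) (Ec_sym t)"
proof (induction t)
  case (V i) then show ?case by (simp add: rp_def)
next
  case (M s u) then show ?case by (simp add: mulS_ren[symmetric] DS_ren[symmetric] negS_ren[symmetric])
qed

lemma del_map: "del i (map f l) = map f (del i l)"
  by (simp add: del_def take_map drop_map)

lemma perms_map: "perms (map f l) = map (map f) (perms l)"
proof (induction l rule: perms.induct)
  case 1 then show ?case by simp
next
  case (2 x xs)
  define l where "l = x # xs"
  have IH: "perms (map f (del i l)) = map (map f) (perms (del i l))" if "i < length l" for i
    using 2[of i] that unfolding l_def by (auto simp: less_Suc_eq)
  have ne: "l \<noteq> []" "map f l \<noteq> []" by (auto simp: l_def)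
  have "perms (map f l) = concat (map (\<lambda>i. map (Cons (map f l ! i)) (perms (del i (map f l)))) [0..<length l])"
    using perms_nonempty[OF ne(2)] by simp
  also have "\<dots> = concat (map (\<lambda>i. map (map f) (map (Cons (l ! i)) (perms (del i l)))) [0..<length l])"
    by (rule arg_cong[where f = concat], rule map_cong[OF refl]) (simp add: del_map IH)
  also have "\<dots> = map (map f) (perms l)"
    using perms_nonempty[OF ne(1)] by (simp add: map_concat comp_def)
  finally show ?case unfolding l_def .
qed

lemma gsym_ren: "gsym (map (rp \<rho>) l) = map (\<lambda>(c,T). (c, mren \<rho> T)) (gsym l)"
  by (simp add: gsym_def rp_def)

lemma PS_ren: "PS (map (\<lambda>(c,l). (c, map (rp \<rho>) l)) xs) = map (\<lambda>(c,T). (c, mren \<rho> T)) (PS xs)"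
  by (simp add: PS_def map_concat comp_def case_prod_beta perms_map gsym_ren)

section \<open>Coefficient comparison\<close>

definition coefl :: "(int \<times> mon) list \<Rightarrow> mon \<Rightarrow> int" where
  "coefl xs T = sum_list (map fst (filter (\<lambda>p. snd p = T) xs))"

definition chk :: "(int \<times> mon) list \<Rightarrow> (int \<times> mon) list \<Rightarrow> bool" where
  "chk xs ys = list_all (\<lambda>T. coefl xs T = coefl ys T) (map snd xs @ map snd ys)"

lemma evalC_coef:
  assumes "finite S" "set (map snd xs) \<subseteq> S"
  shows "evalC (map (\<lambda>(c,T). (c, f T)) xs) = (\<Sum>T\<in>S. psc (of_int (coefl xs T)) (ind (f T)) :: 'k::field npoly)"
  using assms(2)
proof (induction xs)
  case Nil then show ?case by (simp add: coefl_def)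
next
  case (Cons a xs)
  obtain c T0 where a: "a = (c,T0)" by force
  have T0: "T0 \<in> S" using Cons.prems a by auto
  have IH: "evalC (map (\<lambda>(c,T). (c, f T)) xs) = (\<Sum>T\<in>S. psc (of_int (coefl xs T)) (ind (f T)) :: 'k npoly)"
    using Cons a by auto
  have "evalC (map (\<lambda>(c,T). (c, f T)) (a # xs)) = psc (of_int c) (ind (f T0)) + (evalC (map (\<lambda>(c,T). (c, f T)) xs) :: 'k npoly)"
    by (simp add: a evalC_Cons)
  also have "\<dots> = psc (of_int c) (ind (f T0)) + (\<Sum>T\<in>S. psc (of_int (coefl xs T)) (ind (f T)))"
    unfolding IH ..
  also have "\<dots> = (\<Sum>T\<in>S. psc (of_int (if T = T0 then c else 0)) (ind (f T))) + (\<Sum>T\<in>S. psc (of_int (coefl xs T)) (ind (f T)))"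
    using T0 assms(1) by (simp add: if_distrib[of "\<lambda>x. psc (of_int x) _"] sum.delta cong: if_cong)
  also have "\<dots> = (\<Sum>T\<in>S. psc (of_int (coefl (a # xs) T)) (ind (f T)))"
    unfolding sum.distrib[symmetric] psc_add_left[symmetric]
    by (rule sum.cong[OF refl]) (auto simp: coefl_def a)
  finally show ?case .
qed

lemma chk_eval:
  assumes "chk xs ys"
  shows "evalC (map (\<lambda>(c,T). (c, f T)) xs) = (evalC (map (\<lambda>(c,T). (c, f T)) ys) :: 'k::field npoly)"
proof -
  let ?S = "set (map snd xs) \<union> set (map snd ys)"
  have "evalC (map (\<lambda>(c,T). (c, f T)) xs) = (\<Sum>T\<in>?S. psc (of_int (coefl xs T)) (ind (f T)) :: 'k npoly)"
    by (rule evalC_coef) auto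
  also have "\<dots> = (\<Sum>T\<in>?S. psc (of_int (coefl ys T)) (ind (f T)))"
    using assms by (intro sum.cong refl) (auto simp: chk_def list_all_iff)
  also have "\<dots> = evalC (map (\<lambda>(c,T). (c, f T)) ys)"
    by (rule evalC_coef[symmetric]) auto
  finally show ?thesis .
qed

lemma evalC_negS: "evalC (negS xs) = - (evalC xs :: 'k::field npoly)"
proof -
  have e: "map (\<lambda>(c,T). psc (of_int c) (ind T) :: 'k npoly) (negS xs) = map (uminus \<circ> (\<lambda>(c,T). psc (of_int c) (ind T))) xs"
    by (auto simp: negS_def psc_def fun_eq_iff)
  show ?thesis
    unfolding evalC_def uminus_sum_list_map e ..
qed

lemma evalC_map_id: "evalC (map (\<lambda>(c,T). (c, mren id T)) xs) = evalC xs"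
proof -
  have "mren id T = T" for T by (induction T) auto
  then show ?thesis by (simp add: case_prod_beta)
qed

lemma shape_ok:
  assumes "chk ((12, t0) # negS (PS (Ec_sym t0))) (CL cert)"
  shows "psc (12::'k::field) (ind (mren \<rho> t0)) - Psi (Ec (mren \<rho> t0) :: 'k alg) \<in> Lie_ideal"
proof -
  let ?f = "\<lambda>xs. map (\<lambda>(c,T). (c, mren \<rho> T)) xs"
  have "Psi (Ec (mren \<rho> t0) :: 'k alg) = evalC (?f (PS (Ec_sym t0)))"
    by (simp add: Psi_Ec Ec_sym_ren PS_ren)
  moreover have "?f (negS (PS (Ec_sym t0))) = negS (?f (PS (Ec_sym t0)))"
    by (simp add: negS_def case_prod_beta)
  ultimately have "psc (12::'k) (ind (mren \<rho> t0)) - Psi (Ec (mren \<rho> t0) :: 'k alg) = evalC (?f ((12, t0) # negS (PS (Ec_sym t0))))"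
    by (simp add: evalC_Cons evalC_negS)
  also have "\<dots> = evalC (?f (CL cert))"
    by (rule chk_eval[OF assms])
  also have "\<dots> = evalC (CL (map (\<lambda>(c,r). (c, rren \<rho> r)) cert))"
    by (simp add: CL_rren)
  finally show ?thesis using CL_Lie by simp
qed



definition cert0 :: "(int \<times> rel) list" where
  "cert0 = []"

definition shape0 :: mon where "shape0 = V 0"

definition cert1 :: "(int \<times> rel) list" where
  "cert1 = [(6, RA (V 0) (V 1))]"

definition shape1 :: mon where "shape1 = M (V 0) (V 1)"

definition cert2 :: "(int \<times> rel) list" where
  "cert2 = [(-8, RA (V 1) (M (V 0) (V 2))), (-8, RA (V 1) (M (V 2) (V 0))), (-4, RA (V 0) (M (V 1) (V 2))), (8, RJ (V 0) (V 1) (V 2)), (-4, RA (V 0) (M (V 2) (V 1))), (4, RJ (V 0) (V 2) (V 1)), (4, RL (V 0) (RA (V 1) (V 2))), (8, RL (V 1) (RA (V 0) (V 2)))]"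

definition shape2 :: mon where "shape2 = M (M (V 0) (V 1)) (V 2)"

definition cert3 :: "(int \<times> rel) list" where
  "cert3 = [(-4, RA (V 1) (M (V 0) (V 2))), (-4, RA (V 1) (M (V 2) (V 0))), (4, RA (V 0) (M (V 1) (V 2))), (-8, RA (V 0) (M (V 2) (V 1))), (4, RJ (V 0) (V 2) (V 1)), (8, RL (V 0) (RA (V 1) (V 2))), (4, RL (V 1) (RA (V 0) (V 2)))]"

definition shape3 :: mon where "shape3 = M (V 0) (M (V 1) (V 2))"

definition cert4 :: "(int \<times> rel) list" where
  "cert4 = [(3, RA (V 2) (M (M (V 0) (V 3)) (V 1))), (-9, RA (V 1) (M (M (V 2) (V 3)) (V 0))), (-9, RA (V 2) (M (V 3) (M (V 0) (V 1)))), (-3, RA (V 1) (M (V 0) (M (V 2) (V 3)))), (-3, RA (M (V 2) (V 0)) (M (V 1) (V 3))), (-6, RA (V 0) (M (M (V 1) (V 3)) (V 2))), (-3, RA (V 1) (M (V 3) (M (V 2) (V 0)))), (-3, RA (V 0) (M (M (V 2) (V 3)) (V 1))), (-9, RA (V 0) (M (V 1) (M (V 2) (V 3)))), (3, RJ (V 0) (M (V 1) (V 3)) (V 2)), (9, RJ (V 2) (V 3) (M (V 0) (V 1))), (3, RA (V 2) (M (V 1) (M (V 0) (V 3)))), (3, RJ (V 2) (V 3) (M (V 1) (V 0))), (-3, RA (V 2) (M (V 0) (M (V 1) (V 3)))), (3, RA (V 0) (M (V 3) (M (V 2) (V 1)))), (-3, RA (M (V 1) (V 0)) (M (V 2) (V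 3))), (3, RJ (V 1) (V 3) (M (V 2) (V 0))), (-9, RA (M (V 0) (V 1)) (M (V 2) (V 3))), (3, RA (M (V 0) (V 3)) (M (V 2) (V 1))), (6, RA (V 1) (M (M (V 0) (V 3)) (V 2))), (9, RL (V 2) (RA (V 0) (M (V 1) (V 3)))), (3, RJ (V 0) (M (V 2) (V 3)) (V 1)), (3, RL (V 0) (RA (V 1) (M (V 2) (V 3)))), (-3, RJ (V 0) (V 3) (M (V 2) (V 1))), (9, RJ (V 0) (V 1) (M (V 2) (V 3))), (-3, RA (V 2) (M (V 3) (M (V 1) (V 0)))), (-3, RA (V 2) (M (M (V 1) (V 3)) (V 0))), (-3, RJ (V 1) (M (V 0) (V 3)) (V 2)), (9, RL (V 1) (RA (V 0) (M (V 2) (V 3)))), (-3, RA (V 2) (M (M (V 0) (V 1)) (V 3))), (6, RL (V 2) (RA (V 0) (M (V 3) (V 1)))), (3, RL (V 2) (RA (V 3) (M (V 1) (V 0)))), (3, RL (V 1) (RA (V 3) (M (V 2) (V 0)))), (6, RL (V 1) (RA (V 0) (M (V 3) (V 2)))), (3, RA (V 2) (M (M (V 1) (V 0)) (V 3))), (-3, RL (V 0) (RA (V 3) (M (V 2) (V 1)))), (9, RL (V 2) (RA (V 3) (M (V 0) (V 1)))), (-6, RL (V 0) (RA (V 1) (M (V 3) (V 2)))), (3, RL (V 2) (RA (V 1) (M (V 0) (V 3)))), (6, RL (V 2) (RA (V 1) (M (V 3) (V 0)))), (-6, RL (V 2) (RJ (V 0) (V 3) (V 1))), (6, RL (V 0)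 (RL (V 1) (RA (V 2) (V 3)))), (-3, RA (V 0) (M (M (V 2) (V 1)) (V 3))), (-6, RL (V 2) (RJ (V 0) (V 1) (V 3))), (-6, RL (V 1) (RL (V 0) (RA (V 2) (V 3)))), (-6, RL (V 2) (RL (V 1) (RA (V 0) (V 3)))), (-6, RL (V 1) (RJ (V 0) (V 3) (V 2))), (3, RA (V 1) (M (M (V 2) (V 0)) (V 3))), (-6, RL (V 2) (RL (V 0) (RA (V 1) (V 3)))), (6, RL (V 0) (RJ (V 1) (V 3) (V 2)))]"

definition shape4 :: mon where "shape4 = M (M (M (V 0) (V 1)) (V 2)) (V 3)"

definition cert5 :: "(int \<times> rel) list" where
  "cert5 = [(-3, RA (V 2) (M (M (V 0) (V 3)) (V 1))), (-3, RA (M (V 0) (V 3)) (M (V 1) (V 2))), (6, RA (V 1) (M (M (V 2) (V 3)) (V 0))), (-9, RA (V 0) (M (M (V 1) (V 2)) (V 3))), (3, RJ (V 1) (V 2) (M (V 0) (V 3))), (3, RA (V 2) (M (V 3) (M (V 0) (V 1)))), (-3, RA (V 0) (M (V 3) (M (V 1) (V 2)))), (-3, RA (V 1) (M (V 3) (M (V 0) (V 2)))), (-3, RA (V 1) (M (V 2) (M (V 0) (V 3)))), (-3, RA (V 0) (M (M (V 1) (V 3)) (V 2))), (3, RJ (V 0) (V 3) (M (V 1) (V 2))), (3, RJ (V 1) (V 3) (M (V 0) (V 2))), (3, RA (V 0) (M (M (V 2) (V 3)) (V 1))), (3, RA (V 0) (M (V 1) (M (V 2) (V 3)))), (-3, RJ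 (V 2) (V 3) (M (V 0) (V 1))), (3, RA (V 2) (M (V 1) (M (V 0) (V 3)))), (-12, RA (M (V 3) (V 0)) (M (V 1) (V 2))), (-12, RA (V 1) (M (V 2) (M (V 3) (V 0)))), (3, RA (V 1) (M (M (V 0) (V 2)) (V 3))), (3, RA (V 0) (M (V 3) (M (V 2) (V 1)))), (3, RA (M (V 0) (V 1)) (M (V 2) (V 3))), (3, RA (M (V 0) (V 3)) (M (V 2) (V 1))), (3, RL (V 1) (RA (V 3) (M (V 0) (V 2)))), (3, RA (V 1) (M (M (V 0) (V 3)) (V 2))), (12, RJ (V 0) (M (V 1) (V 2)) (V 3)), (-9, RL (V 0) (RA (V 1) (M (V 2) (V 3)))), (-12, RA (V 2) (M (M (V 3) (V 0)) (V 1))), (6, RL (V 1) (RA (V 2) (M (V 3) (V 0)))), (-3, RJ (V 0) (V 3) (M (V 2) (V 1))), (-3, RJ (V 0) (V 1) (M (V 2) (V 3))), (-6, RA (V 2) (M (M (V 1) (V 3)) (V 0))), (-3, RJ (V 1) (M (V 0) (V 3)) (V 2)), (6, RL (V 0) (RJ (V 1) (V 2) (V 3))), (-3, RA (V 0) (M (V 2) (M (V 1) (V 3)))), (-6, RL (V 0) (RA (V 2) (M (V 3) (V 1)))), (-6, RL (V 1) (RJ (V 0) (V 2) (V 3))), (3, RJ (V 0) (V 2) (M (V 1) (V 3))), (3, RL (V 0) (RA (V 3) (M (V 1) (V 2)))), (12, RJ (V 1) (V 2) (M (V 3) (V 0))), (-3, RA (M (V 0) (V 2)) (M (V 1) (V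 3))), (-3, RA (V 2) (M (M (V 0) (V 1)) (V 3))), (-3, RL (V 0) (RA (V 3) (M (V 2) (V 1)))), (-3, RL (V 2) (RA (V 3) (M (V 0) (V 1)))), (-6, RL (V 0) (RA (V 1) (M (V 3) (V 2)))), (3, RL (V 2) (RA (V 1) (M (V 0) (V 3)))), (6, RL (V 2) (RA (V 1) (M (V 3) (V 0)))), (-3, RL (V 1) (RA (V 2) (M (V 0) (V 3)))), (6, RL (V 0) (RL (V 1) (RA (V 2) (V 3)))), (-3, RA (V 0) (M (M (V 2) (V 1)) (V 3))), (6, RL (V 2) (RJ (V 0) (V 1) (V 3))), (-3, RL (V 0) (RA (V 2) (M (V 1) (V 3)))), (6, RL (V 1) (RL (V 2) (RA (V 0) (V 3)))), (-6, RL (V 2) (RL (V 1) (RA (V 0) (V 3)))), (6, RL (V 0) (RL (V 2) (RA (V 1) (V 3)))), (6, RL (V 0) (RJ (V 1) (V 3) (V 2)))]"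

definition shape5 :: mon where "shape5 = M (M (V 0) (M (V 1) (V 2))) (V 3)"

definition cert6 :: "(int \<times> rel) list" where
  "cert6 = [(-3, RA (M (V 0) (V 3)) (M (V 1) (V 2))), (-12, RA (V 1) (M (M (V 2) (V 3)) (V 0))), (3, RA (V 0) (M (M (V 1) (V 2)) (V 3))), (3, RJ (V 1) (V 2) (M (V 0) (V 3))), (-3, RA (V 0) (M (V 3) (M (V 1) (V 2)))), (3, RA (V 1) (M (V 3) (M (V 0) (V 2)))), (-3, RA (V 1) (M (V 2) (M (V 0) (V 3)))), (-3, RA (M (V 2) (V 0)) (M (V 1) (V 3))), (-6, RA (V 0) (M (M (V 1) (V 3)) (V 2))), (-3, RA (V 1) (M (V 3) (M (V 2) (V 0)))), (-3, RA (V 1) (M (M (V 3) (V 0)) (V 2))), (3, RJ (V 0) (V 3) (M (V 1) (V 2))), (-3, RJ (V 1) (V 3) (M (V 0) (V 2))), (3, RA (V 2) (M (M (V 3) (V 1)) (V 0))), (-12, RA (V 0) (M (V 1) (M (V 2) (V 3)))), (3, RJ (V 0) (M (V 1) (V 3)) (V 2)), (3, RA (V 2) (M (V 1) (M (V 0) (V 3)))), (-3, RA (V 2) (M (V 0) (M (V 1) (V 3)))), (-3, RA (V 1) (M (M (V 0) (V 2)) (V 3))), (3, RA (V 0) (M (V 3) (M (V 2) (V 1)))), (3, RJ (V 1) (V 3) (M (V 2) (V 0))), (3, RA (M (V 0) (V 3)) (M (V 2) (V 1))), (-3, RL (V 1) (RA (V 3) (M (V 0) (V 2)))), (6, RA (V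 1) (M (M (V 0) (V 3)) (V 2))), (6, RL (V 0) (RA (V 1) (M (V 2) (V 3)))), (-3, RA (V 2) (M (M (V 3) (V 0)) (V 1))), (-3, RL (V 1) (RA (V 2) (M (V 3) (V 0)))), (-3, RJ (V 0) (V 3) (M (V 2) (V 1))), (3, RA (V 0) (M (M (V 3) (V 1)) (V 2))), (12, RJ (V 0) (V 1) (M (V 2) (V 3))), (-3, RJ (V 1) (M (V 0) (V 3)) (V 2)), (-6, RL (V 0) (RJ (V 1) (V 2) (V 3))), (6, RL (V 1) (RA (V 0) (M (V 2) (V 3)))), (3, RA (V 0) (M (V 2) (M (V 1) (V 3)))), (3, RL (V 0) (RA (V 2) (M (V 3) (V 1)))), (6, RL (V 1) (RJ (V 0) (V 2) (V 3))), (-3, RJ (V 0) (V 2) (M (V 1) (V 3))), (3, RL (V 0) (RA (V 3) (M (V 1) (V 2)))), (3, RA (M (V 0) (V 2)) (M (V 1) (V 3))), (-3, RL (V 2) (RA (V 0) (M (V 3) (V 1)))), (3, RL (V 1) (RA (V 3) (M (V 2) (V 0)))), (6, RL (V 1) (RA (V 0) (M (V 3) (V 2)))), (-3, RL (V 0) (RA (V 3) (M (V 2) (V 1)))), (-6, RL (V 0) (RA (V 1) (M (V 3) (V 2)))), (3, RL (V 2) (RA (V 1) (M (V 3) (V 0)))), (6, RL (V 0) (RL (V 1) (RA (V 2) (V 3)))), (-3, RA (V 0) (M (M (V 2) (V 1)) (V 3))), (-6, RL (V 1) (RL (V 0) (RA (V 2) (V 3)))), (3, RL (V 1) (RL (V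 2) (RA (V 0) (V 3)))), (-3, RL (V 2) (RL (V 1) (RA (V 0) (V 3)))), (-3, RL (V 0) (RL (V 2) (RA (V 1) (V 3)))), (-6, RL (V 1) (RJ (V 0) (V 3) (V 2))), (3, RA (V 1) (M (M (V 2) (V 0)) (V 3))), (3, RL (V 2) (RL (V 0) (RA (V 1) (V 3)))), (6, RL (V 0) (RJ (V 1) (V 3) (V 2)))]"

definition shape6 :: mon where "shape6 = M (M (V 0) (V 1)) (M (V 2) (V 3))"

definition cert7 :: "(int \<times> rel) list" where
  "cert7 = [(-3, RA (V 2) (M (M (V 0) (V 3)) (V 1))), (-3, RA (M (V 0) (V 3)) (M (V 1) (V 2))), (3, RA (V 0) (M (M (V 1) (V 2)) (V 3))), (3, RJ (V 1) (V 2) (M (V 0) (V 3))), (-3, RA (V 0) (M (V 3) (M (V 1) (V 2)))), (-3, RA (V 1) (M (V 2) (M (V 0) (V 3)))), (3, RA (V 1) (M (V 0) (M (V 2) (V 3)))), (-3, RA (M (V 2) (V 0)) (M (V 1) (V 3))), (-3, RA (V 0) (M (M (V 1) (V 3)) (V 2))), (-3, RA (V 1) (M (V 3) (M (V 2) (V 0)))), (3, RJ (V 0) (V 3) (M (V 1) (V 2))), (3, RA (V 0) (M (M (V 2) (V 3)) (V 1))), (-3, RA (V 2) (M (M (V 3) (V 1)) (V 0))), (3, RJ (V 0) (M (V 1) (V 3)) (V 2)), (3, RA (V 2) (M (V 1) (M (V 0) (V 3)))), (-3, RJ (V 2) (V 3) (M (V 1) (V 0))), (-3, RA (V 2) (M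 (V 0) (M (V 1) (V 3)))), (3, RA (V 0) (M (V 3) (M (V 2) (V 1)))), (3, RA (M (V 1) (V 0)) (M (V 2) (V 3))), (3, RJ (V 1) (V 3) (M (V 2) (V 0))), (3, RA (M (V 0) (V 3)) (M (V 2) (V 1))), (3, RA (V 1) (M (M (V 0) (V 3)) (V 2))), (-3, RJ (V 0) (M (V 2) (V 3)) (V 1)), (-9, RL (V 0) (RA (V 1) (M (V 2) (V 3)))), (-3, RJ (V 0) (V 3) (M (V 2) (V 1))), (-3, RA (V 0) (M (M (V 3) (V 1)) (V 2))), (3, RA (V 2) (M (V 3) (M (V 1) (V 0)))), (-3, RJ (V 1) (M (V 0) (V 3)) (V 2)), (6, RL (V 0) (RJ (V 1) (V 2) (V 3))), (-3, RL (V 0) (RA (V 2) (M (V 3) (V 1)))), (3, RL (V 0) (RA (V 3) (M (V 1) (V 2)))), (-3, RL (V 2) (RA (V 0) (M (V 3) (V 1)))), (-3, RL (V 2) (RA (V 3) (M (V 1) (V 0)))), (3, RL (V 1) (RA (V 3) (M (V 2) (V 0)))), (3, RL (V 1) (RA (V 0) (M (V 3) (V 2)))), (-3, RA (V 2) (M (M (V 1) (V 0)) (V 3))), (-3, RL (V 0) (RA (V 3) (M (V 2) (V 1)))), (3, RA (V 0) (M (M (V 3) (V 2)) (V 1))), (-9, RL (V 0) (RA (V 1) (M (V 3) (V 2)))), (-3, RL (V 2) (RA (V 1) (M (V 0) (V 3)))), (3, RL (V 1) (RA (V 2) (M (V 0) (V 3)))), (6, RL (V 2) (RJ (V 0) (V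 3) (V 1))), (9, RL (V 0) (RL (V 1) (RA (V 2) (V 3)))), (-3, RA (V 0) (M (M (V 2) (V 1)) (V 3))), (-3, RL (V 0) (RA (V 2) (M (V 1) (V 3)))), (-3, RL (V 1) (RL (V 0) (RA (V 2) (V 3)))), (3, RA (V 1) (M (M (V 3) (V 2)) (V 0))), (3, RL (V 0) (RL (V 2) (RA (V 1) (V 3)))), (-6, RL (V 1) (RJ (V 0) (V 3) (V 2))), (3, RA (V 1) (M (M (V 2) (V 0)) (V 3))), (3, RL (V 2) (RL (V 0) (RA (V 1) (V 3)))), (6, RL (V 0) (RJ (V 1) (V 3) (V 2)))]"

definition shape7 :: mon where "shape7 = M (V 0) (M (M (V 1) (V 2)) (V 3))"

definition cert8 :: "(int \<times> rel) list" where
  "cert8 = [(-3, RA (V 2) (M (M (V 0) (V 3)) (V 1))), (-3, RA (M (V 0) (V 3)) (M (V 1) (V 2))), (-3, RA (V 1) (M (M (V 2) (V 3)) (V 0))), (3, RA (V 0) (M (M (V 1) (V 2)) (V 3))), (3, RJ (V 1) (V 2) (M (V 0) (V 3))), (-3, RA (V 0) (M (V 3) (M (V 1) (V 2)))), (-3, RA (V 1) (M (V 2) (M (V 0) (V 3)))), (-3, RA (M (V 2) (V 0)) (M (V 1) (V 3))), (-6, RA (V 0) (M (M (V 1) (V 3)) (V 2))), (-3, RA (V 1) (M (V 3) (M (V 2) (V 0)))), (-3, RA (V 1) (M (M (V 3) (V 0)) (V 2))), (3, RJ (V 0) (V 3) (M (V 1) (V 2))), (-3, RA (V 0) (M (M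 (V 2) (V 3)) (V 1))), (3, RJ (V 0) (M (V 1) (V 3)) (V 2)), (-3, RA (V 2) (M (V 0) (M (V 1) (V 3)))), (3, RJ (V 1) (V 3) (M (V 2) (V 0))), (3, RL (V 2) (RA (V 0) (M (V 1) (V 3)))), (9, RL (V 0) (RA (V 1) (M (V 2) (V 3)))), (-3, RA (V 2) (M (M (V 3) (V 0)) (V 1))), (3, RL (V 1) (RA (V 2) (M (V 3) (V 0)))), (-3, RA (V 2) (M (M (V 1) (V 3)) (V 0))), (-6, RL (V 0) (RJ (V 1) (V 2) (V 3))), (3, RL (V 1) (RA (V 0) (M (V 2) (V 3)))), (6, RL (V 0) (RA (V 2) (M (V 3) (V 1)))), (3, RL (V 0) (RA (V 3) (M (V 1) (V 2)))), (3, RL (V 1) (RA (V 3) (M (V 2) (V 0)))), (3, RL (V 1) (RA (V 0) (M (V 3) (V 2)))), (3, RA (V 0) (M (M (V 3) (V 2)) (V 1))), (-3, RL (V 0) (RA (V 1) (M (V 3) (V 2)))), (3, RL (V 2) (RA (V 1) (M (V 0) (V 3)))), (3, RL (V 2) (RA (V 1) (M (V 3) (V 0)))), (6, RL (V 1) (RA (V 2) (M (V 0) (V 3)))), (3, RL (V 0) (RL (V 1) (RA (V 2) (V 3)))), (6, RL (V 0) (RA (V 2) (M (V 1) (V 3)))), (-3, RL (V 1) (RL (V 0) (RA (V 2) (V 3)))), (3, RA (V 1) (M (M (V 3) (V 2)) (V 0))), (-3, RL (V 1) (RL (V 2) (RA (V 0) (V 3)))), (-3, RL (V 2) (RL (V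 1) (RA (V 0) (V 3)))), (-6, RL (V 0) (RL (V 2) (RA (V 1) (V 3)))), (-6, RL (V 1) (RJ (V 0) (V 3) (V 2))), (3, RA (V 1) (M (M (V 2) (V 0)) (V 3)))]"

definition shape8 :: mon where "shape8 = M (V 0) (M (V 1) (M (V 2) (V 3)))"
lemma chk0: "chk ((12, shape0) # negS (PS (Ec_sym shape0))) (CL cert0)"
  unfolding shape0_def cert0_def by code_simp

lemma chk1: "chk ((12, shape1) # negS (PS (Ec_sym shape1))) (CL cert1)"
  unfolding shape1_def cert1_def by code_simp

lemma chk2: "chk ((12, shape2) # negS (PS (Ec_sym shape2))) (CL cert2)"
  unfolding shape2_def cert2_def by code_simp

lemma chk3: "chk ((12, shape3) # negS (PS (Ec_sym shape3))) (CL cert3)"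
  unfolding shape3_def cert3_def by code_simp

lemma chk4: "chk ((12, shape4) # negS (PS (Ec_sym shape4))) (CL cert4)"
  unfolding shape4_def cert4_def by code_simp

lemma chk5: "chk ((12, shape5) # negS (PS (Ec_sym shape5))) (CL cert5)"
  unfolding shape5_def cert5_def by code_simp

lemma chk6: "chk ((12, shape6) # negS (PS (Ec_sym shape6))) (CL cert6)"
  unfolding shape6_def cert6_def by code_simp

lemma chk7: "chk ((12, shape7) # negS (PS (Ec_sym shape7))) (CL cert7)"
  unfolding shape7_def cert7_def by code_simp

lemma chk8: "chk ((12, shape8) # negS (PS (Ec_sym shape8))) (CL cert8)"
  unfolding shape8_def cert8_def by code_simp

lemma mdeg_pos: "mdeg t \<ge> 1"
  by (induction t) auto

lemma deg1:
  assumes "mdeg t = 1" shows "\<exists>a. t = V a"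
proof (cases t)
  case (V x) then show ?thesis by simp
next
  case (M s u) then show ?thesis using assms mdeg_pos[of s] mdeg_pos[of u] by simp
qed

lemma deg2:
  assumes "mdeg t = 2" shows "\<exists>a b. t = M (V a) (V b)"
proof (cases t)
  case (V x) then show ?thesis using assms by simp
next
  case (M s u)
  then have "mdeg s = 1" "mdeg u = 1" using assms mdeg_pos[of s] mdeg_pos[of u] by auto
  then show ?thesis using deg1 M by blast
qed

lemma deg3:
  assumes "mdeg t = 3" shows "\<exists>a b c. t = M (M (V a) (V b)) (V c) \<or> t = M (V a) (M (V b) (V c))"
proof (cases t)
  case (V x) then show ?thesis using assms by simp
next
  case (M s u)
  then have "(mdeg s = 1 \<and> mdeg u = 2) \<or> (mdeg s = 2 \<and> mdeg u = 1)"
    using assms mdeg_pos[of s] mdeg_pos[of u] by auto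
  then show ?thesis
  proof (elim disjE conjE)
    assume "mdeg s = 1" "mdeg u = 2"
    then obtain a b c where "s = V a" "u = M (V b) (V c)" using deg1 deg2 by blast
    then show ?thesis using M by blast
  next
    assume "mdeg s = 2" "mdeg u = 1"
    then obtain a b c where "s = M (V a) (V b)" "u = V c" using deg1 deg2 by blast
    then show ?thesis using M by blast
  qed
qed

lemma deg4:
  assumes "mdeg t = 4"
  shows "\<exists>a b c d. t = M (M (M (V a) (V b)) (V c)) (V d) \<or> t = M (M (V a) (M (V b) (V c))) (V d)
   \<or> t = M (M (V a) (V b)) (M (V c) (V d)) \<or> t = M (V a) (M (M (V b) (V c)) (V d)) \<or> t = M (V a) (M (V b) (M (V c) (V d)))"
proof (cases t)
  case (V x) then show ?thesis using assms by simp
next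
  case (M s u)
  then have "(mdeg s = 1 \<and> mdeg u = 3) \<or> (mdeg s = 2 \<and> mdeg u = 2) \<or> (mdeg s = 3 \<and> mdeg u = 1)"
    using assms mdeg_pos[of s] mdeg_pos[of u] by auto
  then show ?thesis
  proof (elim disjE conjE)
    assume "mdeg s = 1" "mdeg u = 3"
    then obtain a b c d where "s = V a" "u = M (M (V b) (V c)) (V d) \<or> u = M (V b) (M (V c) (V d))"
      using deg1 deg3 by blast
    then show ?thesis using M by blast
  next
    assume "mdeg s = 2" "mdeg u = 2"
    then obtain a b c d where "s = M (V a) (V b)" "u = M (V c) (V d)" using deg2 by blast
    then show ?thesis using M by blast
  next
    assume "mdeg s = 3" "mdeg u = 1"
    then obtain a b c d where "s = M (M (V a) (V b)) (V c) \<or> s = M (V a) (M (V b) (V c))" "u = V d"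
      using deg1 deg3 by blast
    then show ?thesis using M by blast
  qed
qed

definition rho4 :: "nat \<Rightarrow> nat \<Rightarrow> nat \<Rightarrow> nat \<Rightarrow> nat \<Rightarrow> nat" where
  "rho4 a b c d n = (if n = 0 then a else if n = 1 then b else if n = 2 then c else d)"

lemma key_lemma:
  assumes "mdeg t \<le> 4"
  shows "psc (12::'k::field) (ind t) - Psi (Ec t :: 'k alg) \<in> Lie_ideal"
proof -
  have "mdeg t = 1 \<or> mdeg t = 2 \<or> mdeg t = 3 \<or> mdeg t = 4"
    using assms mdeg_pos[of t] by auto
  then show ?thesis
  proof (elim disjE)
    assume "mdeg t = 1"
    then obtain a where "t = V a" using deg1 by blast
    then have "t = mren (rho4 a 0 0 0) shape0" by (simp add: shape0_def rho4_def)
    then show ?thesis using shape_ok[OF chk0] by simp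
  next
    assume "mdeg t = 2"
    then obtain a b where "t = M (V a) (V b)" using deg2 by blast
    then have "t = mren (rho4 a b 0 0) shape1" by (simp add: shape1_def rho4_def)
    then show ?thesis using shape_ok[OF chk1] by simp
  next
    assume "mdeg t = 3"
    then obtain a b c where "t = M (M (V a) (V b)) (V c) \<or> t = M (V a) (M (V b) (V c))" using deg3 by blast
    then show ?thesis
    proof (elim disjE)
      assume "t = M (M (V a) (V b)) (V c)"
      then have "t = mren (rho4 a b c 0) shape2" by (simp add: shape2_def rho4_def)
      then show ?thesis using shape_ok[OF chk2] by simp
    next
      assume "t = M (V a) (M (V b) (V c))"
      then have "t = mren (rho4 a b c 0) shape3" by (simp add: shape3_def rho4_def)
      then show ?thesis using shape_ok[OF chk3] by simp
    qed
  next
    assume "mdeg t = 4"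
    then obtain a b c d where "t = M (M (M (V a) (V b)) (V c)) (V d) \<or> t = M (M (V a) (M (V b) (V c))) (V d)
       \<or> t = M (M (V a) (V b)) (M (V c) (V d)) \<or> t = M (V a) (M (M (V b) (V c)) (V d)) \<or> t = M (V a) (M (V b) (M (V c) (V d)))"
      using deg4 by blast
    then show ?thesis
    proof (elim disjE)
      assume "t = M (M (M (V a) (V b)) (V c)) (V d)"
      then have "t = mren (rho4 a b c d) shape4" by (simp add: shape4_def rho4_def)
      then show ?thesis using shape_ok[OF chk4] by simp
    next
      assume "t = M (M (V a) (M (V b) (V c))) (V d)"
      then have "t = mren (rho4 a b c d) shape5" by (simp add: shape5_def rho4_def)
      then show ?thesis using shape_ok[OF chk5] by simp
    next
      assume "t = M (M (V a) (V b)) (M (V c) (V d))"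
      then have "t = mren (rho4 a b c d) shape6" by (simp add: shape6_def rho4_def)
      then show ?thesis using shape_ok[OF chk6] by simp
    next
      assume "t = M (V a) (M (M (V b) (V c)) (V d))"
      then have "t = mren (rho4 a b c d) shape7" by (simp add: shape7_def rho4_def)
      then show ?thesis using shape_ok[OF chk7] by simp
    next
      assume "t = M (V a) (M (V b) (M (V c) (V d)))"
      then have "t = mren (rho4 a b c d) shape8" by (simp add: shape8_def rho4_def)
      then show ?thesis using shape_ok[OF chk8] by simp
    qed
  qed
qed

lemma f_expand:
  assumes "fin_supp (f :: 'k::field npoly)"
  shows "f = (\<Sum>t\<in>{t. f t \<noteq> 0}. psc (f t) (ind t))"
proof (rule ext)
  fix u
  have fin: "finite {t. f t \<noteq> 0}" using assms by (simp add: fin_supp_def)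
  have "(\<Sum>t\<in>{t. f t \<noteq> 0}. psc (f t) (ind t)) u = (\<Sum>t\<in>{t. f t \<noteq> 0}. (if u = t then f t else 0))"
    unfolding sum_fun_apply psc_def ind_def by (rule sum.cong) auto
  also have "\<dots> = f u" using fin by (simp add: sum.delta)
  finally show "f u = (\<Sum>t\<in>{t. f t \<noteq> 0}. psc (f t) (ind t)) u" by simp
qed

theorem mainTheorem8:
  fixes f :: "'k::field_char_0 npoly"
  assumes "fin_supp f"
    and "\<forall>t. f t \<noteq> 0 \<longrightarrow> mdeg t \<le> 4"
    and "is_identity_LSB1_comm f"
  shows "f \<in> Lie_ideal"
proof -
  let ?S = "{t. f t \<noteq> 0}"
  have fin: "finite ?S" using assms(1) by (simp add: fin_supp_def)
  have z: "(\<Sum>t\<in>?S. sc (f t) (Ec t :: 'k alg)) = 0"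
    by (rule identity_Ec[OF assms(1,3)])
  have pz: "(\<Sum>t\<in>?S. psc (f t) (Psi (Ec t :: 'k alg))) = 0"
  proof -
    have "Psi (\<Sum>t\<in>?S. sc (f t) (Ec t :: 'k alg)) = 0" using z by simp
    then show ?thesis by (simp add: Psi_sum Psi_sc)
  qed
  have "psc 12 f = (\<Sum>t\<in>?S. psc (f t) (psc 12 (ind t)))"
    by (subst f_expand[OF assms(1)]) (simp add: psc_sum psc_psc mult.commute)
  also have "\<dots> = (\<Sum>t\<in>?S. psc (f t) (psc 12 (ind t) - Psi (Ec t :: 'k alg))) + (\<Sum>t\<in>?S. psc (f t) (Psi (Ec t :: 'k alg)))"
    by (simp add: sum.distrib[symmetric] psc_def fun_eq_iff algebra_simps sum_fun_apply)
  also have "\<dots> = (\<Sum>t\<in>?S. psc (f t) (psc 12 (ind t) - Psi (Ec t :: 'k alg)))"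
    using pz by simp
  finally have e: "psc 12 f = (\<Sum>t\<in>?S. psc (f t) (psc 12 (ind t) - Psi (Ec t :: 'k alg)))" .
  have "psc 12 f \<in> Lie_ideal"
    unfolding e
    by (rule Lie_sum, rule Lie_psc, rule key_lemma) (use assms(2) in auto)
  then have "psc (1/12) (psc 12 f) \<in> Lie_ideal" by (rule Lie_psc)
  then show ?thesis by (simp add: psc_psc)
qed


end
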